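(* Let $\varphi=\frac{1+\sqrt5}{2}$ be the golden ratio and let $(F_n)_{n\ge1}$ be the Fibonacci numbers with $F_1=F_2=1$ and $F_{n+1}=F_n+F_{n-1}$. For $n\in\mathbb{N}_{>0}$ let $\sigma_{F_n}\in S_{F_n}$ be the Kronecker permutation associated with $(\{k\varphi\})_{k=1}^{F_n}$, i.e. the unique permutation of $\{1,\dots,F_n\}$ with $\{\sigma_{F_n}(1)\varphi\}<\{\sigma_{F_n}(2)\varphi\}<\dots<\{\sigma_{F_n}(F_n)\varphi\}$. Then: (1) If $n$ is even, the cycle decomposition of $\sigma_{F_n}$ consists only of 2-cycles and fixed points. (2) If $n\equiv 1$ or $n\equiv 5 \pmod 6$, the cycle decomposition of $\sigma_{F_n}$ consists of cycles of length 4 and exactly one fixed point. (3) If $n\equiv 3 \pmod 6$, the cycle decomposition of $\sigma_{F_n}$ consists of cycles of length 4 and exactly one cycle of length 2.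
   Context: For real $x$, $\{x\}=x-\lfloor x\rfloor$ denotes the fractional part. For an irrational $\alpha>0$ and $N\in\mathbb{N}$, the $N$ numbers $\{k\alpha\}$, $1\le k\le N$, are distinct, and the Kronecker permutation $\sigma_N\in S_N$ is defined by ordering them increasingly: $\{\sigma_N(1)\alpha\}<\dots<\{\sigma_N(N)\alpha\}$. Cycle lengths refer to the disjoint cycle decomposition of the permutation (a fixed point is a cycle of length 1). *)

theory Defs
  imports Complex_Main "HOL-Combinatorics.Combinatorics" "HOL-Number_Theory.Fib"
begin

definition kronecker_perm :: "real \<Rightarrow> nat \<Rightarrow> nat \<Rightarrow> nat" where
  "kronecker_perm \<alpha> N = (THE \<sigma>. \<sigma> permutes {1..N} \<and>
      (\<forall>i\<in>{1..N}. \<forall>j\<in>{1..N}. i < j \<longrightarrow> frac (real (\<sigma> i) * \<alpha>) < frac (real (\<sigma> j) * \<alpha>)))"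

definition golden_ratio :: real where
  "golden_ratio = (1 + sqrt 5) / 2"

definition cycles_of :: "('a \<Rightarrow> 'a) \<Rightarrow> 'a set \<Rightarrow> 'a set set" where
  "cycles_of p A = (\<lambda>x. orbit p x) ` A"

end

theory Submission
  imports Defs
begin

definition psi :: real where "psi = (1 - sqrt 5) / 2"

lemma phi_psi: "golden_ratio * psi = -1" "golden_ratio + psi = 1"
  "psi * psi = psi + 1" "golden_ratio > 1" "psi < 0" "golden_ratio * \<bar>psi\<bar> = 1"
  "golden_ratio * golden_ratio = golden_ratio + 1"
proof -
  have s: "sqrt 5 * sqrt 5 = 5" by simp
  have s2: "sqrt 5 > 1" by (simp add: real_less_rsqrt)
  have e1: "(1 + sqrt 5) * (1 - sqrt 5) = 1 - sqrt 5 * sqrt 5" by (simp add: algebra_simps)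
  have e2: "(1 - sqrt 5) * (1 - sqrt 5) = 1 - 2 * sqrt 5 + sqrt 5 * sqrt 5" by (simp add: algebra_simps)
  have e3: "(1 + sqrt 5) * (1 + sqrt 5) = 1 + 2 * sqrt 5 + sqrt 5 * sqrt 5" by (simp add: algebra_simps)
  show 1: "golden_ratio * psi = -1" unfolding golden_ratio_def psi_def
    using e1 s by simp
  show "golden_ratio + psi = 1" unfolding golden_ratio_def psi_def by (simp add: field_simps)
  show "psi * psi = psi + 1" unfolding psi_def
    using e2 s by simp
  show "golden_ratio * golden_ratio = golden_ratio + 1" unfolding golden_ratio_def
    using e3 s by simp
  show "golden_ratio > 1" unfolding golden_ratio_def using s2 by simp
  show n: "psi < 0" unfolding psi_def using s2 by simp
  show "golden_ratio * \<bar>psi\<bar> = 1" using 1 n by simp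
qed

lemma fib_phi: "real (fib n) * golden_ratio = real (fib (Suc n)) - psi ^ n"
proof (induction n rule: fib.induct)
  case 1 then show ?case by simp
next
  case 2 then show ?case using phi_psi(2) by simp
next
  case (3 n)
  have "real (fib (Suc (Suc n))) * golden_ratio = real (fib n) * golden_ratio + real (fib (Suc n)) * golden_ratio"
    by (simp add: algebra_simps)
  also have "\<dots> = real (fib (Suc n)) + real (fib (Suc (Suc n))) - (psi ^ n + psi ^ Suc n)"
    using 3 by simp
  also have "psi ^ n + psi ^ Suc n = psi ^ Suc (Suc n)"
  proof -
    have "psi ^ Suc (Suc n) = psi ^ n * (psi * psi)" by (simp add: algebra_simps)
    also have "\<dots> = psi ^ n + psi ^ Suc n" using phi_psi(3) by (simp add: algebra_simps)
    finally show ?thesis by simp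
  qed
  finally show ?case by simp
qed

lemma fib_le_phi: "real (fib n) * golden_ratio \<le> golden_ratio ^ n"
proof (induction n rule: fib.induct)
  case 1 then show ?case by simp
next
  case 2 then show ?case by simp
next
  case (3 n)
  have gg: "golden_ratio * golden_ratio = golden_ratio + 1" by (rule phi_psi(7))
  have "real (fib (Suc (Suc n))) * golden_ratio = real (fib n) * golden_ratio + real (fib (Suc n)) * golden_ratio"
    by (simp add: algebra_simps)
  also have "\<dots> \<le> golden_ratio ^ n + golden_ratio ^ Suc n" using 3 by simp
  also have "\<dots> = golden_ratio ^ n * (1 + golden_ratio)" by (simp add: algebra_simps)
  also have "\<dots> = golden_ratio ^ n * (golden_ratio * golden_ratio)" using gg by simp
  also have "\<dots> = golden_ratio ^ Suc (Suc n)" by (simp add: algebra_simps)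
  finally show ?case .
qed

lemma fib_psi_bound: "real (fib n) * \<bar>psi\<bar> ^ n < 1"
proof -
  have "real (fib n) * \<bar>psi\<bar> ^ n * golden_ratio = real (fib n) * golden_ratio * \<bar>psi\<bar> ^ n"
    by simp
  also have "\<dots> \<le> golden_ratio ^ n * \<bar>psi\<bar> ^ n"
    using fib_le_phi by (simp add: mult_right_mono)
  also have "\<dots> = 1" using phi_psi(6) by (simp add: power_mult_distrib[symmetric])
  finally have "real (fib n) * \<bar>psi\<bar> ^ n * golden_ratio \<le> 1" .
  moreover have "golden_ratio > 1" by (rule phi_psi)
  moreover have "real (fib n) * \<bar>psi\<bar> ^ n \<ge> 0" by simp
  ultimately show ?thesis
    by (smt (verit) mult_le_cancel_left1 mult.commute)
qed

definition rk :: "nat \<Rightarrow> nat \<Rightarrow> nat" where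
  "rk n k = (if odd n then k * fib (Suc n) mod fib n + 1
     else if k * fib (Suc n) mod fib n = 0 then fib n else k * fib (Suc n) mod fib n)"

lemma rk_range: "n > 0 \<Longrightarrow> rk n k \<in> {1..fib n}"
proof -
  assume n: "n > 0"
  define r where "r = k * fib (Suc n) mod fib n"
  have F: "fib n > 0" using fib_neq_0_nat[OF n] .
  have "r < fib n" unfolding r_def using F by simp
  then show ?thesis unfolding rk_def r_def[symmetric] by (cases "odd n"; cases "r = 0") simp_all
qed

lemma rk_mod_nat: "n > 0 \<Longrightarrow> rk n k mod fib n = (k * fib (Suc n) + (if odd n then 1 else 0)) mod fib n"
proof -
  assume n: "n > 0"
  define r where "r = k * fib (Suc n) mod fib n"
  have F: "fib n > 0" using fib_neq_0_nat[OF n] .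
  show ?thesis
  proof (cases "odd n")
    case True
    then show ?thesis unfolding rk_def by (simp add: mod_Suc_eq)
  next
    case False
    then show ?thesis unfolding rk_def r_def[symmetric] by (cases "r = 0") (simp_all add: r_def)
  qed
qed

lemma rk_mod: "n > 0 \<Longrightarrow> int (rk n k) mod int (fib n) =
   (int k * int (fib (Suc n)) + (if odd n then 1 else 0)) mod int (fib n)"
proof -
  assume n: "n > 0"
  have "int (rk n k mod fib n) = int ((k * fib (Suc n) + (if odd n then 1 else 0)) mod fib n)"
    using rk_mod_nat[OF n, of k] by simp
  then show ?thesis by (simp add: of_nat_mod)
qed

lemma psi_pow: "psi ^ n = (if odd n then - (\<bar>psi\<bar> ^ n) else \<bar>psi\<bar> ^ n)"
proof -
  have e: "psi = - \<bar>psi\<bar>" using phi_psi(5) by simp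
  have "psi ^ n = (- \<bar>psi\<bar>) ^ n" using e by (rule arg_cong)
  also have "\<dots> = (if odd n then - (\<bar>psi\<bar> ^ n) else \<bar>psi\<bar> ^ n)" by simp
  finally show ?thesis .
qed

lemma frac_rk:
  assumes n: "n > 0" and k: "k \<in> {1..fib n}"
  shows "\<exists>c. 0 < c \<and> c < 1 \<and> frac (real k * golden_ratio) = (real (rk n k) - c) / real (fib n)"
proof -
  define F where "F = fib n"
  define m where "m = fib (Suc n)"
  define q where "q = k * m div F"
  define r where "r = k * m mod F"
  define t where "t = real k * \<bar>psi\<bar> ^ n"
  have Fpos: "F > 0" using fib_neq_0_nat[OF n] F_def by simp
  have kF: "k \<le> F" "1 \<le> k" using k F_def by auto
  have rF: "r < F" using Fpos r_def by simp
  have km: "real k * real m = real q * real F + real r"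
  proof -
    have "k * m = q * F + r" unfolding q_def r_def by simp
    then have "real (k * m) = real (q * F + r)" by simp
    then show ?thesis by simp
  qed
  have tpos: "t > 0" unfolding t_def using kF phi_psi(5) by simp
  have "t \<le> real F * \<bar>psi\<bar> ^ n" unfolding t_def using kF by (simp add: mult_right_mono)
  then have t1: "t < 1" using fib_psi_bound[of n] F_def by simp
  have kphi: "real k * golden_ratio = real q + (real r - real k * psi ^ n) / real F"
  proof -
    have "real F * golden_ratio = real m - psi ^ n" using fib_phi[of n] F_def m_def by simp
    then have h2: "real k * golden_ratio * real F = real k * real m - real k * psi ^ n"
      by (metis mult.assoc mult.commute right_diff_distrib)
    then have "real k * golden_ratio = (real k * real m - real k * psi ^ n) / real F"
      using Fpos by (simp add: eq_divide_eq)
    also have "\<dots> = real q + (real r - real k * psi ^ n) / real F"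
      using km Fpos by (simp add: field_simps)
    finally show ?thesis .
  qed
  show ?thesis
  proof (cases "odd n")
    case True
    then have ps: "real k * psi ^ n = - t" unfolding t_def using psi_pow[of n] by simp
    have rk: "rk n k = r + 1" unfolding rk_def r_def F_def m_def using True by simp
    have "frac (real k * golden_ratio) = (real r + t) / real F"
      unfolding frac_unique_iff
    proof (intro conjI)
      show "real k * golden_ratio - (real r + t) / real F \<in> \<int>" using kphi ps by simp
      show "0 \<le> (real r + t) / real F" using tpos by simp
      have "real r + t < real F" using rF t1 by linarith
      then show "(real r + t) / real F < 1" using Fpos by simp
    qed
    then show ?thesis using rk tpos t1 F_def
      by (intro exI[of _ "1 - t"]) (simp add: algebra_simps)
  next
    case False
    then have ps: "real k * psi ^ n = t" unfolding t_def using psi_pow[of n] by simp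
    show ?thesis
    proof (cases "r = 0")
      case True
      have rk: "rk n k = F" unfolding rk_def using True False r_def F_def m_def by simp
      have "frac (real k * golden_ratio) = (real F - t) / real F"
        unfolding frac_unique_iff
      proof (intro conjI)
        have "real k * golden_ratio - (real F - t) / real F = real q - 1"
          using kphi ps True Fpos by (simp add: field_simps)
        then show "real k * golden_ratio - (real F - t) / real F \<in> \<int>" by simp
        show "0 \<le> (real F - t) / real F" using t1 Fpos by simp
        show "(real F - t) / real F < 1" using Fpos tpos by simp
      qed
      then show ?thesis using rk tpos t1 F_def by (intro exI[of _ t]) simp
    next
      case r0: False
      have rk: "rk n k = r" unfolding rk_def using r0 False r_def F_def m_def by simp
      have "frac (real k * golden_ratio) = (real r - t) / real F"
        unfolding frac_unique_iff
      proof (intro conjI)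
        show "real k * golden_ratio - (real r - t) / real F \<in> \<int>" using kphi ps by simp
        show "0 \<le> (real r - t) / real F" using t1 r0 by simp
        have "real r - t < real F" using rF tpos by linarith
        then show "(real r - t) / real F < 1" using Fpos by simp
      qed
      then show ?thesis using rk tpos t1 F_def by (intro exI[of _ t]) simp
    qed
  qed
qed

lemma rk_mono:
  assumes n: "n > 0" and k: "k \<in> {1..fib n}" and j: "j \<in> {1..fib n}" and lt: "rk n k < rk n j"
  shows "frac (real k * golden_ratio) < frac (real j * golden_ratio)"
proof -
  obtain c where c: "0 < c" "c < 1" "frac (real k * golden_ratio) = (real (rk n k) - c) / real (fib n)"
    using frac_rk[OF n k] by blast
  obtain d where d: "0 < d" "d < 1" "frac (real j * golden_ratio) = (real (rk n j) - d) / real (fib n)"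
    using frac_rk[OF n j] by blast
  have Fpos: "real (fib n) > 0" using fib_neq_0_nat[OF n] by simp
  have "real (rk n k) + 1 \<le> real (rk n j)" using lt by linarith
  then have "real (rk n k) - c < real (rk n j) - d" using c d by linarith
  then show ?thesis using c d Fpos by (simp add: divide_strict_right_mono)
qed



definition rho :: "nat \<Rightarrow> nat \<Rightarrow> nat" where
  "rho n x = (if x \<in> {1..fib n} then rk n x else x)"

lemma eq_of_dvd:
  assumes "x \<in> {1..F}" "y \<in> {1..F}" "int F dvd (int x - int y)"
  shows "x = y"
proof (rule ccontr)
  assume "x \<noteq> y"
  then have "int x - int y \<noteq> 0" by simp
  from dvd_imp_le_int[OF this assms(3)] have "\<bar>int F\<bar> \<le> \<bar>int x - int y\<bar>" .
  moreover have "\<bar>int x - int y\<bar> < int F" using assms(1,2) by auto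
  ultimately show False by simp
qed

lemma coprime_F_m: "coprime (int (fib n)) (int (fib (Suc n)))"
  using coprime_fib_Suc_nat[of n] by simp

lemma rk_inj:
  assumes n: "n > 0" and k: "k \<in> {1..fib n}" and j: "j \<in> {1..fib n}" and eq: "rk n k = rk n j"
  shows "k = j"
proof -
  define c :: int where "c = (if odd n then 1 else 0)"
  have "(int k * int (fib (Suc n)) + c) mod int (fib n) = (int j * int (fib (Suc n)) + c) mod int (fib n)"
    using rk_mod[OF n, of k] rk_mod[OF n, of j] eq c_def by simp
  then have "int (fib n) dvd (int k * int (fib (Suc n)) + c) - (int j * int (fib (Suc n)) + c)"
    by (simp add: mod_eq_dvd_iff)
  then have "int (fib n) dvd (int k - int j) * int (fib (Suc n))"
    by (simp add: algebra_simps)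
  then have "int (fib n) dvd (int k - int j)"
    using coprime_F_m[of n] by (simp add: coprime_dvd_mult_left_iff)
  then show ?thesis using eq_of_dvd k j by blast
qed

lemma rho_permutes:
  assumes n: "n > 0"
  shows "rho n permutes {1..fib n}"
proof (rule bij_imp_permutes)
  let ?S = "{1..fib n}"
  have inj: "inj_on (rho n) ?S"
    by (rule inj_onI) (auto simp: rho_def intro: rk_inj[OF n])
  have sub: "rho n ` ?S \<subseteq> ?S" using rk_range[OF n] by (auto simp: rho_def)
  have "rho n ` ?S = ?S" using endo_inj_surj[OF _ sub inj] by simp
  then show "bij_betw (rho n) ?S ?S" using inj by (simp add: bij_betw_def)
  show "\<And>x. x \<notin> ?S \<Longrightarrow> rho n x = x" unfolding rho_def by (rule if_not_P)
qed

lemma rank_card: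
  fixes f :: "nat \<Rightarrow> real"
  assumes g: "g permutes {1..N}"
    and mono: "\<forall>a\<in>{1..N}. \<forall>b\<in>{1..N}. g a < g b \<longrightarrow> f a < f b"
    and x: "x \<in> {1..N}"
  shows "g x = card {y\<in>{1..N}. f y \<le> f x}"
proof -
  let ?S = "{1..N}"
  have inj: "inj_on g ?S" using g by (rule permutes_inj_on)
  have gS: "g ` ?S = ?S" using g by (rule permutes_image)
  have gx: "g x \<in> ?S" using gS x by blast
  have set: "{y\<in>?S. f y \<le> f x} = {y\<in>?S. g y \<le> g x}"
  proof (intro set_eqI iffI)
    fix y assume "y \<in> {y\<in>?S. f y \<le> f x}"
    then have y: "y \<in> ?S" "f y \<le> f x" by auto
    show "y \<in> {y\<in>?S. g y \<le> g x}"
    proof (rule ccontr)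
      assume "y \<notin> {y\<in>?S. g y \<le> g x}"
      then have "g x < g y" using y by auto
      then have "f x < f y" using mono x y by blast
      then show False using y by simp
    qed
  next
    fix y assume "y \<in> {y\<in>?S. g y \<le> g x}"
    then have y: "y \<in> ?S" "g y \<le> g x" by auto
    show "y \<in> {y\<in>?S. f y \<le> f x}"
    proof (cases "g y = g x")
      case True
      then have "y = x" using inj x y by (auto dest: inj_onD)
      then show ?thesis using y by simp
    next
      case False
      then have "f y < f x" using mono x y by auto
      then show ?thesis using y by simp
    qed
  qed
  have img: "g ` {y\<in>?S. g y \<le> g x} = {1..g x}"
  proof (intro set_eqI iffI)
    fix z assume "z \<in> g ` {y\<in>?S. g y \<le> g x}"
    then obtain y where "y \<in> ?S" "g y \<le> g x" "z = g y" by auto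
    then show "z \<in> {1..g x}" using gS by auto
  next
    fix z assume z: "z \<in> {1..g x}"
    then have "z \<in> ?S" using gx by auto
    then obtain y where "y \<in> ?S" "z = g y" using gS by (metis imageE)
    then show "z \<in> g ` {y\<in>?S. g y \<le> g x}" using z by auto
  qed
  have "card {y\<in>?S. g y \<le> g x} = card (g ` {y\<in>?S. g y \<le> g x})"
    by (rule card_image[symmetric]) (rule inj_on_subset[OF inj], auto)
  also have "\<dots> = g x" using img by simp
  finally show ?thesis using set by simp
qed

lemma kron_eq:
  assumes n: "n > 0"
  shows "kronecker_perm golden_ratio (fib n) = inv (rho n)"
proof -
  let ?S = "{1..fib n}"
  let ?P = "\<lambda>\<sigma>. \<sigma> permutes ?S \<and>
      (\<forall>i\<in>?S. \<forall>j\<in>?S. i < j \<longrightarrow> frac (real (\<sigma> i) * golden_ratio) < frac (real (\<sigma> j) * golden_ratio))"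
  have rp: "rho n permutes ?S" by (rule rho_permutes[OF n])
  have rmono: "\<forall>a\<in>?S. \<forall>b\<in>?S. rho n a < rho n b \<longrightarrow>
      frac (real a * golden_ratio) < frac (real b * golden_ratio)"
    using rk_mono[OF n] by (auto simp: rho_def)
  have ex: "?P (inv (rho n))"
  proof
    show "inv (rho n) permutes ?S" using rp by (rule permutes_inv)
    show "\<forall>i\<in>?S. \<forall>j\<in>?S. i < j \<longrightarrow> frac (real (inv (rho n) i) * golden_ratio) < frac (real (inv (rho n) j) * golden_ratio)"
    proof (intro ballI impI)
      fix i j assume i: "i \<in> ?S" and j: "j \<in> ?S" and ij: "i < j"
      have a: "inv (rho n) i \<in> ?S" "inv (rho n) j \<in> ?S"
        using permutes_in_image[OF permutes_inv[OF rp]] i j by auto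
      have "rho n (inv (rho n) i) = i" "rho n (inv (rho n) j) = j"
        using permutes_inverses(1)[OF rp] by auto
      then have "rho n (inv (rho n) i) < rho n (inv (rho n) j)" using ij by simp
      then show "frac (real (inv (rho n) i) * golden_ratio) < frac (real (inv (rho n) j) * golden_ratio)"
        using rmono a by blast
    qed
  qed
  have uniq: "\<sigma> = inv (rho n)" if P: "?P \<sigma>" for \<sigma>
  proof -
    have sp: "\<sigma> permutes ?S" using P by blast
    have isp: "inv \<sigma> permutes ?S" using sp by (rule permutes_inv)
    have imono: "\<forall>a\<in>?S. \<forall>b\<in>?S. inv \<sigma> a < inv \<sigma> b \<longrightarrow>
      frac (real a * golden_ratio) < frac (real b * golden_ratio)"
    proof (intro ballI impI)
      fix a b assume a: "a \<in> ?S" and b: "b \<in> ?S" and lt: "inv \<sigma> a < inv \<sigma> b"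
      have "inv \<sigma> a \<in> ?S" "inv \<sigma> b \<in> ?S" using permutes_in_image[OF isp] a b by auto
      then have "frac (real (\<sigma> (inv \<sigma> a)) * golden_ratio) < frac (real (\<sigma> (inv \<sigma> b)) * golden_ratio)"
        using P lt by (meson)
      then show "frac (real a * golden_ratio) < frac (real b * golden_ratio)"
        using permutes_inverses(1)[OF sp] by simp
    qed
    have "inv \<sigma> = rho n"
    proof
      fix x show "inv \<sigma> x = rho n x"
      proof (cases "x \<in> ?S")
        case True
        show ?thesis using rank_card[OF isp imono True] rank_card[OF rp rmono True] by simp
      next
        case False
        have "rho n x = x" unfolding rho_def using False by (rule if_not_P)
        then show ?thesis using permutes_not_in[OF isp False] by simp
      qed
    qed
    then have "inv (inv \<sigma>) = inv (rho n)" by simp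
    moreover have "inv (inv \<sigma>) = \<sigma>" using permutes_bij[OF sp] by (rule inv_inv_eq)
    ultimately show ?thesis by simp
  qed
  show ?thesis unfolding kronecker_perm_def
    using the_equality[of ?P, OF ex uniq] by simp
qed


lemma rho_in: "n > 0 \<Longrightarrow> x \<in> {1..fib n} \<Longrightarrow> rho n x \<in> {1..fib n}"
  using rk_range[of n x] by (simp add: rho_def)

lemma rho_cong:
  assumes n: "n > 0" and x: "x \<in> {1..fib n}"
  shows "int (fib n) dvd (int (rho n x) - (int x * int (fib (Suc n)) + (if odd n then 1 else 0)))"
proof -
  have "rho n x = rk n x" using x by (simp add: rho_def)
  then show ?thesis using rk_mod[OF n, of x] by (simp add: mod_eq_dvd_iff)
qed

lemma cassini: "int (fib (Suc n)) * int (fib (Suc n)) = int (fib (Suc (Suc n))) * int (fib n) + (-1) ^ n"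
  using fib_Cassini_int[of n] by (simp add: power2_eq_square algebra_simps)

lemma rho2_cong:
  assumes n: "n > 0" and x: "x \<in> {1..fib n}"
  shows "int (fib n) dvd (int (rho n (rho n x)) - ((-1) ^ n * int x + (if odd n then 1 else 0) * (int (fib (Suc n)) + 1)))"
proof -
  define F where "F = int (fib n)"
  define m where "m = int (fib (Suc n))"
  define c :: int where "c = (if odd n then 1 else 0)"
  define y where "y = rho n x"
  define z where "z = rho n y"
  have y: "y \<in> {1..fib n}" using rho_in[OF n x] y_def by simp
  have d1: "F dvd (int y - (int x * m + c))" using rho_cong[OF n x] F_def m_def c_def y_def by simp
  have d2: "F dvd (int z - (int y * m + c))" using rho_cong[OF n y] F_def m_def c_def z_def by simp
  have cas: "m * m = int (fib (Suc (Suc n))) * F + (-1) ^ n" using cassini[of n] F_def m_def by simp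
  have d3: "F dvd int x * (int (fib (Suc (Suc n))) * F)" by simp
  have eq: "int z - ((-1) ^ n * int x + c * (m + 1)) =
      (int z - (int y * m + c)) + m * (int y - (int x * m + c)) + int x * (int (fib (Suc (Suc n))) * F)"
  proof -
    have "int x * (int (fib (Suc (Suc n))) * F) = int x * (m * m) - int x * (-1) ^ n"
      using cas by (simp add: algebra_simps)
    then show ?thesis by (simp add: algebra_simps)
  qed
  have "F dvd (int z - (int y * m + c)) + m * (int y - (int x * m + c)) + int x * (int (fib (Suc (Suc n))) * F)"
    using d1 d2 d3 by (intro dvd_add) auto
  then have "F dvd int z - ((-1) ^ n * int x + c * (m + 1))" by (subst eq)
  then show ?thesis unfolding F_def m_def c_def z_def y_def .
qed

lemma even_rho2:
  assumes n: "n > 0" and e: "even n" and x: "x \<in> {1..fib n}"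
  shows "rho n (rho n x) = x"
proof -
  have "int (fib n) dvd (int (rho n (rho n x)) - int x)" using rho2_cong[OF n x] e by simp
  then show ?thesis using eq_of_dvd rho_in[OF n rho_in[OF n x]] x by blast
qed

lemma odd_rho2:
  assumes n: "n > 0" and o: "odd n" and x: "x \<in> {1..fib n}"
  shows "int (fib n) dvd (int (rho n (rho n x)) - (int (fib (Suc n)) + 1 - int x))"
  using rho2_cong[OF n x] o by (simp add: algebra_simps)

lemma odd_rho4:
  assumes n: "n > 0" and o: "odd n" and x: "x \<in> {1..fib n}"
  shows "rho n (rho n (rho n (rho n x))) = x"
proof -
  define z where "z = rho n (rho n x)"
  have z: "z \<in> {1..fib n}" using z_def rho_in[OF n rho_in[OF n x]] by simp
  have d1: "int (fib n) dvd (int (rho n (rho n z)) - (int (fib (Suc n)) + 1 - int z))"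
    using odd_rho2[OF n o z] .
  have d2: "int (fib n) dvd (int z - (int (fib (Suc n)) + 1 - int x))"
    using odd_rho2[OF n o x] z_def by simp
  have "int (fib n) dvd (int (rho n (rho n z)) - (int (fib (Suc n)) + 1 - int z)) - (int z - (int (fib (Suc n)) + 1 - int x))"
    using d1 d2 by (rule dvd_diff)
  then have "int (fib n) dvd (int (rho n (rho n z)) - int x)" by (simp add: algebra_simps)
  then have "rho n (rho n z) = x" using eq_of_dvd rho_in[OF n rho_in[OF n z]] x by blast
  then show ?thesis using z_def by simp
qed

lemma odd_T_iff:
  assumes n: "n > 0" and o: "odd n" and x: "x \<in> {1..fib n}"
  shows "rho n (rho n x) = x \<longleftrightarrow> int (fib n) dvd (2 * int x - (int (fib (Suc n)) + 1))"
proof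
  assume "rho n (rho n x) = x"
  then have "int (fib n) dvd (int x - (int (fib (Suc n)) + 1 - int x))" using odd_rho2[OF n o x] by simp
  then show "int (fib n) dvd (2 * int x - (int (fib (Suc n)) + 1))" by (simp add: algebra_simps)
next
  assume h: "int (fib n) dvd (2 * int x - (int (fib (Suc n)) + 1))"
  have "int (fib n) dvd (int (rho n (rho n x)) - (int (fib (Suc n)) + 1 - int x)) - (2 * int x - (int (fib (Suc n)) + 1))"
    using odd_rho2[OF n o x] h by (rule dvd_diff)
  then have "int (fib n) dvd (int (rho n (rho n x)) - int x)" by (simp add: algebra_simps)
  then show "rho n (rho n x) = x" using eq_of_dvd rho_in[OF n rho_in[OF n x]] x by blast
qed

lemma rep_exists:
  assumes F: "F > 0"
  shows "\<exists>x\<in>{1..F}. int F dvd (int x - a)"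
proof (cases "a mod int F = 0")
  case True
  have "int F dvd a" using True by (simp add: dvd_eq_mod_eq_0)
  then have "int F dvd int F - a" by (simp add: dvd_diff)
  moreover have "F \<in> {1..F}" using F by simp
  ultimately show ?thesis by blast
next
  case False
  define x where "x = nat (a mod int F)"
  have F': "int F > 0" using F by simp
  have ge: "a mod int F \<ge> 0" using F' by (rule pos_mod_sign)
  have lt: "a mod int F < int F" using F' by (rule pos_mod_bound)
  have xi: "int x = a mod int F" unfolding x_def using ge by simp
  have "x \<in> {1..F}" using xi lt ge False by auto
  moreover have "int x - a = - (a div int F * int F)" using xi minus_div_mult_eq_mod[of a "int F"] by simp
  then have "int F dvd (int x - a)" by simp
  ultimately show ?thesis by blast
qed

lemma fib_even_iff: "even (fib n) \<longleftrightarrow> n mod 3 = 0"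
proof (induction n rule: less_induct)
  case (less n)
  show ?case
  proof (cases "n < 3")
    case True
    then have "n = 0 \<or> n = 1 \<or> n = 2" by auto
    then show ?thesis by (elim disjE) simp_all
  next
    case False
    define k where "k = n - 3"
    have k: "n = Suc (Suc (Suc k))" using False k_def by simp
    have "fib (Suc (Suc (Suc k))) = 2 * fib (Suc k) + fib k" by simp
    then have "fib n = 2 * fib (Suc k) + fib k" using k by simp
    then have "even (fib n) \<longleftrightarrow> even (fib k)" by simp
    also have "\<dots> \<longleftrightarrow> k mod 3 = 0" using less k by simp
    also have "\<dots> \<longleftrightarrow> n mod 3 = 0" using k by presburger
    finally show ?thesis .
  qed
qed


lemma orbit_eq2:
  assumes "p (p x) = x"
  shows "orbit p x = {x, p x}"
proof
  show "orbit p x \<subseteq> {x, p x}"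
  proof
    fix y assume "y \<in> orbit p x"
    then show "y \<in> {x, p x}"
      by induct (use assms in auto)
  qed
  have "p x \<in> orbit p x" by (rule orbit.base)
  moreover then have "p (p x) \<in> orbit p x" by (rule orbit.step)
  ultimately show "{x, p x} \<subseteq> orbit p x" using assms by simp
qed

lemma orbit_eq4:
  assumes "p (p (p (p x))) = x"
  shows "orbit p x = {x, p x, p (p x), p (p (p x))}"
proof
  show "orbit p x \<subseteq> {x, p x, p (p x), p (p (p x))}"
  proof
    fix y assume "y \<in> orbit p x"
    then show "y \<in> {x, p x, p (p x), p (p (p x))}"
      by induct (use assms in auto)
  qed
  have a: "p x \<in> orbit p x" by (rule orbit.base)
  then have b: "p (p x) \<in> orbit p x" by (rule orbit.step)
  then have c: "p (p (p x)) \<in> orbit p x" by (rule orbit.step)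
  then have d: "p (p (p (p x))) \<in> orbit p x" by (rule orbit.step)
  show "{x, p x, p (p x), p (p (p x))} \<subseteq> orbit p x" using a b c d assms by simp
qed

lemma card_orbit_cases:
  assumes inj: "inj p" and p4: "p (p (p (p x))) = x"
  shows "card (orbit p x) = (if p x = x then 1 else if p (p x) = x then 2 else 4)"
proof (cases "p x = x")
  case True
  then have "orbit p x = {x}" by (simp add: orbit_eq_singleton_iff)
  then show ?thesis using True by simp
next
  case False
  show ?thesis
  proof (cases "p (p x) = x")
    case True
    then show ?thesis using False orbit_eq2[of p x, OF True] by simp
  next
    case F2: False
    have i: "\<And>a b. p a = p b \<Longrightarrow> a = b" using inj by (simp add: inj_eq)
    have d1: "x \<noteq> p (p (p x))" using False p4 i by metis
    have d2: "p x \<noteq> p (p x)" using False i by metis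
    have d3: "p x \<noteq> p (p (p x))" using F2 i by metis
    have d4: "p (p x) \<noteq> p (p (p x))" using False i by metis
    show ?thesis using orbit_eq4[of p x, OF p4] False F2 d1 d2 d3 d4 by auto
  qed
qed

lemma half_lemma:
  fixes h d :: int
  assumes h: "h > 0" and dv: "h dvd d" and lt: "\<bar>d\<bar> < 2 * h" and nz: "d \<noteq> 0"
  shows "\<bar>d\<bar> = h"
proof -
  obtain k where k: "d = h * k" using dv by (auto elim: dvdE)
  have ad: "\<bar>d\<bar> = h * \<bar>k\<bar>" using k h by (simp add: abs_mult)
  have "h * \<bar>k\<bar> < h * 2" using ad lt by (simp add: mult.commute)
  then have "\<bar>k\<bar> < 2" using h by (simp add: mult_less_cancel_left_pos)
  moreover have "k \<noteq> 0" using nz k by simp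
  ultimately have "\<bar>k\<bar> = 1" by linarith
  then show ?thesis using ad by simp
qed

theorem theorem1:
  fixes n :: nat
  assumes "n > 0"
  defines "\<sigma> \<equiv> kronecker_perm golden_ratio (fib n)"
  defines "C \<equiv> cycles_of \<sigma> {1..fib n}"
  shows "(even n \<longrightarrow> (\<forall>c\<in>C. card c \<in> {1, 2}))
       \<and> ((n mod 6 = 1 \<or> n mod 6 = 5) \<longrightarrow>
            (\<forall>c\<in>C. card c \<in> {1, 4}) \<and> card {c\<in>C. card c = 1} = 1)
       \<and> (n mod 6 = 3 \<longrightarrow>
            (\<forall>c\<in>C. card c \<in> {2, 4}) \<and> card {c\<in>C. card c = 2} = 1)"
proof -
  note n = assms(1)
  let ?S = "{1..fib n}"
  define p where "p = rho n"
  define F where "F = int (fib n)"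
  define m where "m = int (fib (Suc n))"
  have Fpos: "F > 0" using fib_neq_0_nat[OF n] F_def by simp
  have pp: "p permutes ?S" unfolding p_def by (rule rho_permutes[OF n])
  have perm: "permutation p" using pp by (auto simp: permutation_permutes)
  have injp: "inj p" using pp by (rule permutes_inj)
  have pin: "\<And>x. x \<in> ?S \<Longrightarrow> p x \<in> ?S" unfolding p_def by (rule rho_in[OF n])
  have Ceq: "C = (\<lambda>x. orbit p x) ` ?S"
    unfolding C_def \<sigma>_def cycles_of_def kron_eq[OF n] p_def[symmetric] orbit_inv_eq[OF perm] ..
  have part1: "even n \<longrightarrow> (\<forall>c\<in>C. card c \<in> {1, 2})"
  proof (intro impI ballI)
    fix c assume e: "even n" and c: "c \<in> C"
    then obtain x where x: "x \<in> ?S" and cx: "c = orbit p x" using Ceq by auto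
    have "p (p x) = x" unfolding p_def by (rule even_rho2[OF n e x])
    then have "orbit p x = {x, p x}" by (rule orbit_eq2)
    then have "c = {x, p x}" using cx by simp
    then show "card c \<in> {1, 2}" by (cases "p x = x") auto
  qed
  have card_odd: "\<And>x. odd n \<Longrightarrow> x \<in> ?S \<Longrightarrow>
      card (orbit p x) = (if p x = x then 1 else if p (p x) = x then 2 else 4)"
    using card_orbit_cases[OF injp] odd_rho4[OF n] p_def by blast
  have T_iff: "\<And>x. odd n \<Longrightarrow> x \<in> ?S \<Longrightarrow> p (p x) = x \<longleftrightarrow> F dvd (2 * int x - (m + 1))"
    using odd_T_iff[OF n] p_def F_def m_def by blast
  have part2: "(n mod 6 = 1 \<or> n mod 6 = 5) \<longrightarrow>
            (\<forall>c\<in>C. card c \<in> {1, 4}) \<and> card {c\<in>C. card c = 1} = 1"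
  proof
    assume h6: "n mod 6 = 1 \<or> n mod 6 = 5"
    have o: "odd n" using h6 by presburger
    have "n mod 3 \<noteq> 0" using h6 by presburger
    then have Fodd: "odd F" using fib_even_iff[of n] F_def by simp
    define a where "a = (m + 1) * ((F + 1) div 2)"
    have two: "2 * ((F + 1) div 2) = F + 1" by (rule even_two_times_div_two) (use Fodd in simp)
    obtain x0 where x0: "x0 \<in> ?S" and dx0: "F dvd (int x0 - a)"
      using rep_exists[of "fib n" a] fib_neq_0_nat[OF n] F_def by auto
    have eq: "2 * int x0 - (m + 1) = 2 * (int x0 - a) + F * (m + 1)"
      unfolding a_def using two by (simp add: algebra_simps)
    have "F dvd 2 * (int x0 - a) + F * (m + 1)"
      by (rule dvd_add[OF dvd_mult[OF dx0] dvd_triv_left])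
    then have "F dvd 2 * int x0 - (m + 1)" by (subst eq)
    then have T0: "p (p x0) = x0" using T_iff[OF o x0] by simp
    have uniq: "y = x0" if y: "y \<in> ?S" "p (p y) = y" for y
    proof -
      have "F dvd 2 * int y - (m + 1)" using T_iff[OF o y(1)] y(2) by simp
      then have "F dvd (2 * int y - (m + 1)) - (2 * int x0 - (m + 1))"
        using \<open>F dvd 2 * int x0 - (m + 1)\<close> by (rule dvd_diff)
      then have "F dvd 2 * (int y - int x0)" by (simp add: algebra_simps)
      then have "F dvd ((F + 1) div 2) * (2 * (int y - int x0))" by simp
      then have "F dvd F * (int y - int x0) + (int y - int x0)"
        using two by (simp add: algebra_simps)
      then have "F dvd (int y - int x0)" by (simp add: dvd_add_right_iff)
      then show "y = x0" using eq_of_dvd y(1) x0 F_def by blast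
    qed
    have px0: "p x0 = x0"
      using uniq[OF pin[OF x0]] T0 by simp
    have cards: "card (orbit p x) \<in> {1, 4}" if x: "x \<in> ?S" for x
    proof (cases "p x = x")
      case True then show ?thesis using card_odd[OF o x] by simp
    next
      case False
      have "p (p x) \<noteq> x"
      proof
        assume "p (p x) = x"
        then have "x = x0" by (rule uniq[OF x])
        then show False using False px0 by simp
      qed
      then show ?thesis using card_odd[OF o x] False by simp
    qed
    have set1: "{c\<in>C. card c = 1} = {orbit p x0}"
    proof
      show "{c\<in>C. card c = 1} \<subseteq> {orbit p x0}"
      proof
        fix c assume c: "c \<in> {c\<in>C. card c = 1}"
        then have cC: "c \<in> C" and c1: "card c = 1" by auto
        from cC obtain x where x: "x \<in> ?S" and cx: "c = orbit p x" unfolding Ceq by blast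
        have px: "p x = x"
        proof (rule ccontr)
          assume nx: "p x \<noteq> x"
          have "card (orbit p x) = (if p (p x) = x then 2 else 4)"
            using card_odd[OF o x] nx by simp
          then show False using c1 cx by (simp split: if_splits)
        qed
        have "p (p x) = x" using px by simp
        then have "x = x0" by (rule uniq[OF x])
        then show "c \<in> {orbit p x0}" using cx by simp
      qed
      have "card (orbit p x0) = 1" using card_odd[OF o x0] px0 by simp
      moreover have "orbit p x0 \<in> C" using x0 unfolding Ceq by blast
      ultimately show "{orbit p x0} \<subseteq> {c\<in>C. card c = 1}" by simp
    qed
    have "\<forall>c\<in>C. card c \<in> {1, 4}" using cards unfolding Ceq by blast
    then show "(\<forall>c\<in>C. card c \<in> {1, 4}) \<and> card {c\<in>C. card c = 1} = 1"
      using set1 by simp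
  qed
  have part3: "n mod 6 = 3 \<longrightarrow>
            (\<forall>c\<in>C. card c \<in> {2, 4}) \<and> card {c\<in>C. card c = 2} = 1"
  proof
    assume h6: "n mod 6 = 3"
    have o: "odd n" using h6 by presburger
    have "n mod 3 = 0" using h6 by presburger
    then have Fev: "even F" using fib_even_iff[of n] F_def by simp
    have cop: "coprime F m" unfolding F_def m_def by (rule coprime_F_m)
    have modd: "odd m"
    proof
      assume "even m"
      then have "2 dvd m" "2 dvd F" using Fev by auto
      then have "is_unit (2::int)" using cop coprime_common_divisor by blast
      then show False by simp
    qed
    have nofix: "p x \<noteq> x" if x: "x \<in> ?S" for x
    proof
      assume px: "p x = x"
      have "F dvd (int x - (int x * m + 1))"
        using rho_cong[OF n x] o px p_def F_def m_def by simp
      then have "2 dvd (int x - (int x * m + 1))" using Fev dvd_trans by blast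
      then show False using modd by auto
    qed
    define a where "a = (m + 1) div 2"
    have two: "2 * a = m + 1" unfolding a_def by (rule even_two_times_div_two) (use modd in simp)
    obtain x0 where x0: "x0 \<in> ?S" and dx0: "F dvd (int x0 - a)"
      using rep_exists[of "fib n" a] fib_neq_0_nat[OF n] F_def by auto
    have eq: "2 * int x0 - (m + 1) = 2 * (int x0 - a)"
      using two by (simp add: algebra_simps)
    have "F dvd 2 * (int x0 - a)" by (rule dvd_mult[OF dx0])
    then have Tx0: "F dvd 2 * int x0 - (m + 1)" by (subst eq)
    then have T0: "p (p x0) = x0" using T_iff[OF o x0] by simp
    define h where "h = F div 2"
    have Fh: "F = 2 * h" unfolding h_def using Fev by simp
    have hpos: "h > 0" using Fh Fpos by simp
    have hdvd: "h dvd (int y - int x0)" if y: "y \<in> ?S" "p (p y) = y" for y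
    proof -
      have "F dvd 2 * int y - (m + 1)" using T_iff[OF o y(1)] y(2) by simp
      then have "F dvd (2 * int y - (m + 1)) - (2 * int x0 - (m + 1))"
        using Tx0 by (rule dvd_diff)
      moreover have "(2 * int y - (m + 1)) - (2 * int x0 - (m + 1)) = 2 * (int y - int x0)" by simp
      ultimately have "2 * h dvd 2 * (int y - int x0)" using Fh by metis
      then obtain k where k: "2 * (int y - int x0) = 2 * h * k" by (auto elim: dvdE)
      then have "int y - int x0 = h * k" by simp
      then show ?thesis by simp
    qed
    have absd: "\<bar>int y - int x0\<bar> = h" if y: "y \<in> ?S" "p (p y) = y" "y \<noteq> x0" for y
    proof (rule half_lemma[OF hpos hdvd[OF y(1,2)]])
      show "\<bar>int y - int x0\<bar> < 2 * h" using y(1) x0 Fh F_def by auto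
      show "int y - int x0 \<noteq> 0" using y(3) by simp
    qed
    have px0: "p x0 \<in> ?S" "p (p (p x0)) = p x0" "p x0 \<noteq> x0"
      using pin[OF x0] T0 nofix[OF x0] by auto
    have only: "y = x0 \<or> y = p x0" if y: "y \<in> ?S" "p (p y) = y" for y
    proof (rule ccontr)
      assume "\<not> (y = x0 \<or> y = p x0)"
      then have ne: "y \<noteq> x0" "y \<noteq> p x0" by auto
      have a1: "\<bar>int y - int x0\<bar> = h" using absd[OF y ne(1)] .
      have a2: "\<bar>int (p x0) - int x0\<bar> = h" using absd[OF px0] .
      have a3: "\<bar>int y - int (p x0)\<bar> < 2 * h" using y(1) px0(1) Fh F_def by auto
      have "int y \<noteq> int (p x0)" using ne by simp
      then show False using a1 a2 a3 by arith
    qed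
    have cards: "card (orbit p x) \<in> {2, 4}" if x: "x \<in> ?S" for x
      using card_odd[OF o x] nofix[OF x] by simp
    have set2: "{c\<in>C. card c = 2} = {orbit p x0}"
    proof
      show "{c\<in>C. card c = 2} \<subseteq> {orbit p x0}"
      proof
        fix c assume c: "c \<in> {c\<in>C. card c = 2}"
        then have cC: "c \<in> C" and c2: "card c = 2" by auto
        from cC obtain x where x: "x \<in> ?S" and cx: "c = orbit p x" unfolding Ceq by blast
        have nx: "p x \<noteq> x" by (rule nofix[OF x])
        have ppx: "p (p x) = x"
        proof (rule ccontr)
          assume npp: "p (p x) \<noteq> x"
          have "card (orbit p x) = 4"
            using card_odd[OF o x] nx npp by simp
          then show False using c2 cx by simp
        qed
        have "x = x0 \<or> x = p x0" by (rule only[OF x ppx])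
        then have "orbit p x = orbit p x0"
        proof
          assume "x = x0" then show ?thesis by simp
        next
          assume "x = p x0" then show ?thesis using permutation_orbit_step[OF perm, of x0] by simp
        qed
        then show "c \<in> {orbit p x0}" using cx by simp
      qed
      have "card (orbit p x0) = 2" using card_odd[OF o x0] T0 px0(3) by simp
      moreover have "orbit p x0 \<in> C" using x0 unfolding Ceq by blast
      ultimately show "{orbit p x0} \<subseteq> {c\<in>C. card c = 2}" by simp
    qed
    have "\<forall>c\<in>C. card c \<in> {2, 4}" using cards unfolding Ceq by blast
    then show "(\<forall>c\<in>C. card c \<in> {2, 4}) \<and> card {c\<in>C. card c = 2} = 1"
      using set2 by simp
  qed
  show ?thesis using part1 part2 part3 by blast
qed

end
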